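(* (Wireless network localization.) Let $n\ge 1$, let $\phi_{k1},\dots,\phi_{kn}\in\mathbb{R}$ and $\xi_{k1},\dots,\xi_{kn}\ge 0$. For $\mathbf{x}=[x_1,\dots,x_n]^{\mathsf T}\succeq\mathbf{0}$ let $\mathbf{J}_{\mathrm e}(\mathbf{p}_k;\mathbf{x})=\sum_{j=1}^n x_j\,\xi_{kj}\,\mathbf{J}_{\mathrm r}(\phi_{kj})$ and $\mathcal{P}(\mathbf{p}_k;\mathbf{x})=\operatorname{tr}\{\mathbf{J}_{\mathrm e}^{-1}(\mathbf{p}_k;\mathbf{x})\}$. Then $\mathcal{P}(\mathbf{p}_k;\mathbf{x})$ is a convex function of $\mathbf{x}\succeq\mathbf{0}$, and whenever $\mathbf{J}_{\mathrm e}(\mathbf{p}_k;\mathbf{x})$ is invertible, $$\mathcal{P}(\mathbf{p}_k;\mathbf{x})=\frac{4\cdot\mathbf{1}^{\mathsf T}\mathbf{R}_k\mathbf{x}}{\mathbf{x}^{\mathsf T}\mathbf{R}_k^{\mathsf T}\boldsymbol{\Lambda}_k\mathbf{R}_k\mathbf{x}},$$ where $\mathbf{R}_k=\operatorname{diag}\{\xi_{k1},\dots,\xi_{kn}\}$ and $\boldsymbol{\Lambda}_k$ is the symmetric matrix of rank at most $3$ given by $$\boldsymbol{\Lambda}_k=\mathbf{1}\mathbf{1}^{\mathsf T}-\mathbf{c}(2\boldsymbol{\phi}_k)\mathbf{c}(2\boldsymbol{\phi}_k)^{\mathsf T}-\mathbf{s}(2\boldsymbol{\phi}_k)\mathbf{s}(2\boldsymbol{\phi}_k)^{\mathsf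 T},\qquad \boldsymbol{\phi}_k=[\phi_{k1},\dots,\phi_{kn}]^{\mathsf T}.$$ (Radar network localization.) Let $N_t,N_r\ge1$, let $\phi_{kj}\in\mathbb{R}$ and $\xi_{kj}\ge 0$ for $k=1,\dots,N_r$, $j=1,\dots,N_t$. For $\mathbf{x}\in\mathbb{R}^{N_t}$, $\mathbf{x}\succeq\mathbf{0}$, let $\mathbf{J}_{\mathrm e}(\mathbf{p}_0;\mathbf{x})=\sum_{j=1}^{N_t}\sum_{k=1}^{N_r}x_j\,\xi_{kj}\,\mathbf{J}_{\mathrm r}(\phi_{kj})$ and $\mathcal{P}(\mathbf{p}_0;\mathbf{x})=\operatorname{tr}\{\mathbf{J}_{\mathrm e}^{-1}(\mathbf{p}_0;\mathbf{x})\}$. Then $\mathcal{P}(\mathbf{p}_0;\mathbf{x})$ is a convex function of $\mathbf{x}\succeq\mathbf{0}$, and whenever $\mathbf{J}_{\mathrm e}(\mathbf{p}_0;\mathbf{x})$ is invertible, $$\mathcal{P}(\mathbf{p}_0;\mathbf{x})=\frac{4\cdot\mathbf{1}^{\mathsf T}\mathbf{R}\mathbf{x}}{\mathbf{x}^{\mathsf T}\mathbf{R}^{\mathsf T}\boldsymbol{\Lambda}\mathbf{R}\mathbf{x}},$$ where $\mathbf{R}=[\mathbf{R}_1^{\mathsf T}\ \mathbf{R}_2^{\mathsf T}\ \cdots\ \mathbf{R}_{N_r}^{\mathsf T}]^{\mathsf T}\in\mathbb{R}^{N_rN_t\times N_t}$ with $\mathbf{R}_k=\operatorname{diag}\{\xi_{k1},\dots,\xi_{kN_t}\}$,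 and $\boldsymbol{\Lambda}$ is the symmetric matrix of rank at most $3$ given by $\boldsymbol{\Lambda}=\mathbf{1}\mathbf{1}^{\mathsf T}-\mathbf{c}(2\boldsymbol{\phi})\mathbf{c}(2\boldsymbol{\phi})^{\mathsf T}-\mathbf{s}(2\boldsymbol{\phi})\mathbf{s}(2\boldsymbol{\phi})^{\mathsf T}$ with $\boldsymbol{\phi}=[\boldsymbol{\phi}_1^{\mathsf T}\ \cdots\ \boldsymbol{\phi}_{N_r}^{\mathsf T}]^{\mathsf T}$, $\boldsymbol{\phi}_k=[\phi_{k1},\dots,\phi_{kN_t}]^{\mathsf T}$.
   Context: Notation: $\mathbf{u}(\phi)=[\cos\phi\ \ \sin\phi]^{\mathsf T}$, $\mathbf{J}_{\mathrm r}(\phi)=\mathbf{u}(\phi)\mathbf{u}(\phi)^{\mathsf T}$; for $\boldsymbol\phi=[\phi_1,\dots,\phi_m]^{\mathsf T}$, $\mathbf{c}(\boldsymbol\phi)=[\cos\phi_1,\dots,\cos\phi_m]^{\mathsf T}$ and $\mathbf{s}(\boldsymbol\phi)=[\sin\phi_1,\dots,\sin\phi_m]^{\mathsf T}$; $\mathbf{1}$ is the all-ones vector of appropriate dimension; $\mathbf{x}\succeq\mathbf{0}$ means entrywise nonnegative. $\mathbf{x}$ is the power allocation vector, $\xi$'s are the equivalent ranging coefficients, and $\mathcal{P}$ is the squared position error bound (SPEB); the SPEB is regarded as $+\infty$ when the matrix $\mathbf{J}_{\mathrm e}$ is singular. *)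

theory Defs
  imports "HOL-Analysis.Analysis" "HOL-Library.Extended_Real"
begin

definition outer :: "real^'m \<Rightarrow> real^'n \<Rightarrow> real^'n^'m" where
  "outer u v = (\<chi> i j. u$i * v$j)"

definition uvec :: "real \<Rightarrow> real^2" where
  "uvec \<phi> = vector [cos \<phi>, sin \<phi>]"

definition Jr :: "real \<Rightarrow> real^2^2" where
  "Jr \<phi> = outer (uvec \<phi>) (uvec \<phi>)"

definition cvec :: "real^'n \<Rightarrow> real^'n" where
  "cvec \<phi> = (\<chi> i. cos (\<phi>$i))"

definition svec :: "real^'n \<Rightarrow> real^'n" where
  "svec \<phi> = (\<chi> i. sin (\<phi>$i))"

definition speb :: "real^2^2 \<Rightarrow> ereal" where
  "speb J = (if invertible J then ereal (trace (matrix_inv J)) else \<infinity>)"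

definition nonneg :: "real^'n \<Rightarrow> bool" where
  "nonneg x \<longleftrightarrow> (\<forall>i. 0 \<le> x$i)"

definition Je_wireless :: "real^'n \<Rightarrow> real^'n \<Rightarrow> real^'n \<Rightarrow> real^2^2" where
  "Je_wireless \<phi> \<xi> x = (\<Sum>j\<in>UNIV. (x$j * \<xi>$j) *\<^sub>R Jr (\<phi>$j))"

text \<open>Radar network: J_e(p_0; x) = sum_j sum_k x_j xi_kj J_r(phi_kj);
  phi and xi are indexed as phi$k$j with k a receiver, j a transmitter.\<close>
definition Je_radar :: "real^'t^'r \<Rightarrow> real^'t^'r \<Rightarrow> real^'t \<Rightarrow> real^2^2" where
  "Je_radar \<phi> \<xi> x = (\<Sum>j\<in>UNIV. \<Sum>k\<in>UNIV. (x$j * \<xi>$k$j) *\<^sub>R Jr (\<phi>$k$j))"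

definition Lambda_mat :: "real^'m \<Rightarrow> real^'m^'m" where
  "Lambda_mat \<phi> = outer (vec 1) (vec 1) - outer (cvec (2 *\<^sub>R \<phi>)) (cvec (2 *\<^sub>R \<phi>))
                    - outer (svec (2 *\<^sub>R \<phi>)) (svec (2 *\<^sub>R \<phi>))"

definition diag_mat :: "real^'n \<Rightarrow> real^'n^'n" where
  "diag_mat d = (\<chi> i j. if i = j then d$i else 0)"

text \<open>Stacked matrix R = [R_1^T ... R_Nr^T]^T, rows indexed by pairs (k,i),
  with R_k = diag(xi_k1, ..., xi_kNt).\<close>
definition R_stack :: "real^'t^'r \<Rightarrow> real^'t^('r \<times> 't)" where
  "R_stack \<xi> = (\<chi> ki j. (diag_mat (\<xi>$(fst ki)))$(snd ki)$j)"

text \<open>Stacked angle vector phi = [phi_1^T ... phi_Nr^T]^T indexed by pairs (k,j).\<close>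
definition phi_stack :: "real^'t^'r \<Rightarrow> real^('r \<times> 't)" where
  "phi_stack \<phi> = (\<chi> kj. \<phi>$(fst kj)$(snd kj))"

definition econvex_on :: "'a::real_vector set \<Rightarrow> ('a \<Rightarrow> ereal) \<Rightarrow> bool" where
  "econvex_on S f \<longleftrightarrow> (\<forall>x\<in>S. \<forall>y\<in>S. \<forall>t::real. 0 < t \<and> t < 1 \<longrightarrow>
      f ((1 - t) *\<^sub>R x + t *\<^sub>R y) \<le> ereal (1 - t) * f x + ereal t * f y)"

end

theory Submission imports Defs begin


lemma matrix_inv_eqI:
  fixes A M :: "real^'n^'n"
  assumes "A ** M = mat 1" "M ** A = mat 1"
  shows "matrix_inv A = M"
proof -
  have ex: "\<exists>A'. A ** A' = mat 1 \<and> A' ** A = mat 1" using assms by blast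
  let ?A = "matrix_inv A"
  have h: "A ** ?A = mat 1 \<and> ?A ** A = mat 1"
    unfolding matrix_inv_def by (rule someI_ex[OF ex])
  have "?A = ?A ** (A ** M)" using assms by (simp add: matrix_mul_rid)
  also have "\<dots> = (?A ** A) ** M" by (simp add: matrix_mul_assoc)
  also have "\<dots> = M" using h by (simp add: matrix_mul_lid)
  finally show ?thesis .
qed

lemma speb_2:
  fixes J :: "real^2^2"
  assumes sym: "J$1$2 = J$2$1" and d: "J$1$1 * J$2$2 - J$1$2 * J$2$1 \<noteq> 0"
  shows "speb J = ereal ((J$1$1 + J$2$2) / (J$1$1 * J$2$2 - J$1$2 * J$2$1))"
proof -
  define D where "D = J$1$1 * J$2$2 - J$1$2 * J$2$1"
  define M :: "real^2^2" where "M = (\<chi> i j. if i = 1 \<and> j = 1 then J$2$2 / D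
       else if i = 2 \<and> j = 2 then J$1$1 / D else - J$i$j / D)"
  have inv: "invertible J" using d by (simp add: invertible_det_nz det_2)
  have D0: "D \<noteq> 0" using d D_def by simp
  have 1: "J ** M = mat 1"
    using D0 unfolding M_def
    by (auto simp: vec_eq_iff matrix_matrix_mult_def forall_2 sum_2 mat_def divide_simps D_def sym; simp add: algebra_simps D_def)
  have 2: "M ** J = mat 1"
    using D0 unfolding M_def
    by (auto simp: vec_eq_iff matrix_matrix_mult_def forall_2 sum_2 mat_def divide_simps D_def sym; simp add: algebra_simps D_def)
  have "matrix_inv J = M" by (rule matrix_inv_eqI[OF 1 2])
  then show ?thesis using inv unfolding speb_def D_def[symmetric]
    by (simp add: trace_def sum_2 M_def add_divide_distrib)
qed


lemma quad_nonneg: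
  fixes a b c u y :: real
  assumes "0 < c" "b*b \<le> a*c"
  shows "0 \<le> c*u*u - 2*b*u*y + a*y*y"
proof -
  have "c*(c*u*u - 2*b*u*y + a*y*y) = (c*u - b*y)^2 + (a*c - b*b)*y*y"
    by (simp add: power2_eq_square algebra_simps)
  also have "\<dots> \<ge> 0"
  proof -
    have "0 \<le> (a*c-b*b)*y*y" using assms by (simp add: mult.assoc)
    then show ?thesis by simp
  qed
  finally show ?thesis using assms(1) by (simp add: zero_le_mult_iff)
qed

lemma keyK:
  fixes a b c p r :: real
  assumes "0 \<le> c" "0 < a*c - b*b"
  shows "2*p - (a*p*p + 2*b*p*r + c*r*r) \<le> c / (a*c - b*b)"
proof -
  define d where "d = a*c - b*b"
  have d: "d > 0" using assms d_def by simp
  have c: "c > 0"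
  proof (rule ccontr)
    assume "\<not> c > 0" then have "c = 0" using assms by simp
    then show False using d d_def zero_le_square[of b] by simp
  qed
  have q: "0 \<le> c*(a*p+b*r-1)*(a*p+b*r-1) - 2*b*(a*p+b*r-1)*(b*p+c*r) + a*(b*p+c*r)*(b*p+c*r)"
    by (rule quad_nonneg) (use c d d_def in auto)
  have e: "c*(a*p+b*r-1)*(a*p+b*r-1) - 2*b*(a*p+b*r-1)*(b*p+c*r) + a*(b*p+c*r)*(b*p+c*r)
     = c - d*(2*p - (a*p*p + 2*b*p*r + c*r*r))"
    unfolding d_def by (simp add: algebra_simps)
  have "0 \<le> c - d*(2*p - (a*p*p + 2*b*p*r + c*r*r))"
    using q e by simp
  then have "(2*p - (a*p*p + 2*b*p*r + c*r*r)) * d \<le> c" by (simp add: algebra_simps)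
  then show ?thesis using d unfolding d_def[symmetric] by (simp add: pos_le_divide_eq)
qed

lemma core_convex:
  fixes a1 b1 c1 a2 b2 c2 t :: real
  assumes "0 \<le> a1" "0 \<le> c1" "0 \<le> a2" "0 \<le> c2"
    and d1: "0 < a1*c1 - b1*b1" and d2: "0 < a2*c2 - b2*b2" and t: "0 < t" "t < 1"
  defines "a \<equiv> (1-t)*a1 + t*a2" and "b \<equiv> (1-t)*b1 + t*b2" and "c \<equiv> (1-t)*c1 + t*c2"
  shows "0 < a*c - b*b \<and>
    (a+c)/(a*c-b*b) \<le> (1-t)*((a1+c1)/(a1*c1-b1*b1)) + t*((a2+c2)/(a2*c2-b2*b2))"
proof -
  have cross: "2*b1*b2 \<le> a1*c2 + a2*c1"
  proof -
    have "0 \<le> a1*c2" "0 \<le> a2*c1" using assms by auto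
    have p1: "0 \<le> a1*c1" using d1 zero_le_square[of b1] by linarith
    have p2: "0 \<le> b2*b2" using zero_le_square[of b2] by simp
    have "b1*b1 * (b2*b2) \<le> (a1*c1)*(a2*c2)" 
      by (rule mult_mono) (use d1 d2 p1 p2 in auto)
    then have X: "(b1*b2)^2 \<le> (a1*c2)*(a2*c1)" by (simp add: algebra_simps power2_eq_square)
    have "(2*b1*b2)^2 = 4*(b1*b2)^2" by (simp add: power2_eq_square)
    also have "\<dots> \<le> 4*((a1*c2)*(a2*c1))" using X by simp
    also have "\<dots> \<le> (a1*c2 + a2*c1)^2"
      using zero_le_square[of "a1*c2 - a2*c1"] by (simp add: power2_eq_square algebra_simps)
    finally show ?thesis
      by (rule power2_le_imp_le) (use \<open>0 \<le> a1*c2\<close> \<open>0 \<le> a2*c1\<close> in simp)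
  qed
  have dpos: "0 < a*c - b*b"
  proof -
    have "a*c - b*b = (1-t)^2*(a1*c1-b1*b1) + t^2*(a2*c2-b2*b2) + t*(1-t)*(a1*c2 + a2*c1 - 2*b1*b2)"
      unfolding a_def b_def c_def by (simp add: power2_eq_square algebra_simps)
    moreover have "0 < (1-t)^2*(a1*c1-b1*b1)" using t d1 by simp
    moreover have "0 \<le> t^2*(a2*c2-b2*b2)" using d2 by simp
    moreover have "0 \<le> t*(1-t)*(a1*c2 + a2*c1 - 2*b1*b2)" using t cross by simp
    ultimately show ?thesis by linarith
  qed
  define d where "d = a*c - b*b"
  define p where "p = c/d"
  define r where "r = -b/d"
  define q where "q = -b/d"
  define z where "z = a/d"
  define Q where "Q = (\<lambda>a b c. (2*p - (a*p*p + 2*b*p*r + c*r*r)) + (2*z - (c*z*z + 2*b*z*q + a*q*q)))"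
  have "0 \<le> c1" "0 \<le> a1" by fact+
  have Q1: "Q a1 b1 c1 \<le> (a1+c1)/(a1*c1-b1*b1)"
    using keyK[of c1 a1 b1 p r] keyK[of a1 c1 b1 z q] assms
    unfolding Q_def by (simp add: add_divide_distrib algebra_simps)
  have Q2: "Q a2 b2 c2 \<le> (a2+c2)/(a2*c2-b2*b2)"
    using keyK[of c2 a2 b2 p r] keyK[of a2 c2 b2 z q] assms
    unfolding Q_def by (simp add: add_divide_distrib algebra_simps)
  have lin: "Q a b c = (1-t)*Q a1 b1 c1 + t*Q a2 b2 c2"
    unfolding Q_def a_def b_def c_def by (simp add: algebra_simps)
  have val: "Q a b c = (a+c)/d"
  proof -
    have d0: "d \<noteq> 0" using dpos d_def by simp
    have e1: "a*p*p + 2*b*p*r + c*r*r = c*(a*c-b*b)/(d*d)"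
      unfolding p_def r_def using d0 by (simp add: field_simps power2_eq_square)
    have e2: "c*z*z + 2*b*z*q + a*q*q = a*(a*c-b*b)/(d*d)"
      unfolding z_def q_def using d0 by (simp add: field_simps power2_eq_square)
    have e3: "c*(a*c-b*b)/(d*d) = c/d" "a*(a*c-b*b)/(d*d) = a/d"
      unfolding d_def[symmetric] using d0 by simp_all
    show ?thesis unfolding Q_def e1 e2 e3 unfolding p_def z_def
      by (simp add: add_divide_distrib)
  qed
  have "(a+c)/d \<le> (1-t)*((a1+c1)/(a1*c1-b1*b1)) + t*((a2+c2)/(a2*c2-b2*b2))"
    using val lin Q1 Q2 t by (smt (verit) mult_left_mono)
  then show ?thesis using dpos d_def by simp
qed


definition Jg :: "real^'m \<Rightarrow> real^'m \<Rightarrow> real^2^2" where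
  "Jg \<theta> w = (\<Sum>i\<in>UNIV. w$i *\<^sub>R Jr (\<theta>$i))"

lemma Jg_entries:
  "Jg \<theta> w $1$1 = (\<Sum>i\<in>UNIV. w$i * (cos (\<theta>$i) * cos (\<theta>$i)))"
  "Jg \<theta> w $1$2 = (\<Sum>i\<in>UNIV. w$i * (cos (\<theta>$i) * sin (\<theta>$i)))"
  "Jg \<theta> w $2$1 = (\<Sum>i\<in>UNIV. w$i * (cos (\<theta>$i) * sin (\<theta>$i)))"
  "Jg \<theta> w $2$2 = (\<Sum>i\<in>UNIV. w$i * (sin (\<theta>$i) * sin (\<theta>$i)))"
  by (simp_all add: Jg_def Jr_def outer_def uvec_def mult.commute)

lemma diag_mult: "(diag_mat \<xi> *v x) $ j = \<xi>$j * x$j"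
  by (simp add: diag_mat_def matrix_vector_mult_def if_distrib[where f="\<lambda>a. a * _"] cong: if_cong)

lemma Je_wireless_Jg: "Je_wireless \<phi> \<xi> x = Jg \<phi> (diag_mat \<xi> *v x)"
  by (simp add: Je_wireless_def Jg_def diag_mult mult.commute)

lemma R_stack_mult: "(R_stack \<xi> *v x) $ (k,i) = \<xi>$k$i * x$i"
  by (simp add: R_stack_def diag_mat_def matrix_vector_mult_def if_distrib[where f="\<lambda>a. a * _"] cong: if_cong)

lemma Je_radar_Jg: "Je_radar \<phi> \<xi> x = Jg (phi_stack \<phi>) (R_stack \<xi> *v x)"
proof -
  have "Je_radar \<phi> \<xi> x = (\<Sum>k\<in>UNIV. \<Sum>j\<in>UNIV. (x$j * \<xi>$k$j) *\<^sub>R Jr (\<phi>$k$j))"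
    unfolding Je_radar_def by (rule sum.swap)
  also have "\<dots> = (\<Sum>(k,j)\<in>UNIV \<times> UNIV. (x$j * \<xi>$k$j) *\<^sub>R Jr (\<phi>$k$j))"
    by (rule sum.cartesian_product)
  also have "\<dots> = Jg (phi_stack \<phi>) (R_stack \<xi> *v x)"
    unfolding Jg_def UNIV_Times_UNIV
    by (rule sum.cong) (auto simp: R_stack_mult phi_stack_def mult.commute)
  finally show ?thesis .
qed

lemma sym_sum:
  fixes F G :: "'a::finite \<Rightarrow> 'a \<Rightarrow> real"
  assumes "\<And>i j. F i j + F j i = G i j + G j i"
  shows "(\<Sum>i\<in>UNIV. \<Sum>j\<in>UNIV. F i j) = (\<Sum>i\<in>UNIV. \<Sum>j\<in>UNIV. G i j)"
proof -
  have "2 * (\<Sum>i\<in>UNIV. \<Sum>j\<in>UNIV. F i j) = (\<Sum>i\<in>UNIV. \<Sum>j\<in>UNIV. F i j) + (\<Sum>i\<in>UNIV. \<Sum>j\<in>UNIV. F j i)"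
    using sum.swap[of F UNIV UNIV] by simp
  also have "\<dots> = (\<Sum>i\<in>UNIV. \<Sum>j\<in>UNIV. F i j + F j i)" by (simp add: sum.distrib)
  also have "\<dots> = (\<Sum>i\<in>UNIV. \<Sum>j\<in>UNIV. G i j + G j i)" using assms by simp
  also have "\<dots> = (\<Sum>i\<in>UNIV. \<Sum>j\<in>UNIV. G i j) + (\<Sum>i\<in>UNIV. \<Sum>j\<in>UNIV. G j i)" by (simp add: sum.distrib)
  also have "\<dots> = 2 * (\<Sum>i\<in>UNIV. \<Sum>j\<in>UNIV. G i j)"
    using sum.swap[of G UNIV UNIV] by simp
  finally show ?thesis by simp
qed

lemma trig_id:
  fixes ci si cj sj :: real
  assumes "ci^2 + si^2 = 1" "cj^2 + sj^2 = 1"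
  shows "4*(ci*ci*(sj * sj) - ci * si*(cj * sj)) + 4*(cj*cj*(si * si) - cj * sj*(ci * si))
    = (1 - (ci^2-si^2)*(cj^2-sj^2) - (2 * si * ci)*(2 * sj * cj)) + (1 - (cj^2-sj^2)*(ci^2-si^2) - (2 * sj * cj)*(2 * si * ci))"
proof -
  have h: "(ci^2+si^2)*(cj^2+sj^2) = 1" using assms by simp
  have "(1 - (ci^2-si^2)*(cj^2-sj^2) - (2 * si * ci)*(2 * sj * cj)) + (1 - (cj^2-sj^2)*(ci^2-si^2) - (2 * sj * cj)*(2 * si * ci))
     = 4*(ci*ci*(sj * sj) - ci * si*(cj * sj)) + 4*(cj*cj*(si * si) - cj * sj*(ci * si)) + 2*(1 - (ci^2+si^2)*(cj^2+sj^2))"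
    by (simp add: power2_eq_square algebra_simps)
  then show ?thesis using h by simp
qed

lemma Lambda_entry: "Lambda_mat \<theta> $ i $ j = 1 - cos (2*\<theta>$i) * cos (2*\<theta>$j) - sin (2*\<theta>$i) * sin (2*\<theta>$j)"
  by (simp add: Lambda_mat_def outer_def cvec_def svec_def)

lemma quad_Lambda: "w \<bullet> (Lambda_mat \<theta> *v w) = (\<Sum>i\<in>UNIV. \<Sum>j\<in>UNIV. w$i * w$j * Lambda_mat \<theta> $ i $ j)"
  by (simp add: inner_vec_def matrix_vector_mult_def sum_distrib_left algebra_simps)

lemma det_Jg: "4 * (Jg \<theta> w $1$1 * Jg \<theta> w $2$2 - Jg \<theta> w $1$2 * Jg \<theta> w $2$1) = w \<bullet> (Lambda_mat \<theta> *v w)"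
proof -
  define c where "c i = cos (\<theta>$i)" for i
  define sn where "sn i = sin (\<theta>$i)" for i
  have "4 * (Jg \<theta> w $1$1 * Jg \<theta> w $2$2 - Jg \<theta> w $1$2 * Jg \<theta> w $2$1)
     = (\<Sum>i\<in>UNIV. \<Sum>j\<in>UNIV. w$i * w$j * (4*(c i*c i*(sn j* sn j) - c i* sn i*(c j* sn j))))"
    unfolding Jg_entries c_def sn_def sum_product
    by (simp add: sum_subtractf sum_distrib_left algebra_simps)
  also have "\<dots> = (\<Sum>i\<in>UNIV. \<Sum>j\<in>UNIV. w$i * w$j * Lambda_mat \<theta> $ i $ j)"
  proof (rule sym_sum)
    fix i j
    have t: "4*(c i*c i*(sn j* sn j) - c i* sn i*(c j* sn j)) + 4*(c j*c j*(sn i* sn i) - c j* sn j*(c i* sn i))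
      = Lambda_mat \<theta> $ i $ j + Lambda_mat \<theta> $ j $ i"
      unfolding Lambda_entry cos_double sin_double c_def sn_def
      by (rule trig_id) simp_all
    show "w$i * w$j * (4*(c i*c i*(sn j* sn j) - c i* sn i*(c j* sn j))) + w$j * w$i * (4*(c j*c j*(sn i* sn i) - c j* sn j*(c i* sn i)))
      = w$i * w$j * Lambda_mat \<theta> $ i $ j + w$j * w$i * Lambda_mat \<theta> $ j $ i"
    proof -
      have "w$i * w$j * (4*(c i*c i*(sn j * sn j) - c i * sn i*(c j * sn j))) + w$j * w$i * (4*(c j*c j*(sn i * sn i) - c j * sn j*(c i * sn i)))
         = w$i * w$j * (4*(c i*c i*(sn j * sn j) - c i * sn i*(c j * sn j)) + 4*(c j*c j*(sn i * sn i) - c j * sn j*(c i * sn i)))"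
        by (simp add: algebra_simps)
      also have "\<dots> = w$i * w$j * (Lambda_mat \<theta> $ i $ j + Lambda_mat \<theta> $ j $ i)" by (simp only: t)
      finally show ?thesis by (simp add: algebra_simps)
    qed
  qed
  finally show ?thesis by (simp add: quad_Lambda)
qed


lemma speb_Jg:
  assumes "invertible (Jg \<theta> w)"
  shows "speb (Jg \<theta> w) = ereal (4 * sum (\<lambda>i. w$i) UNIV / (w \<bullet> (Lambda_mat \<theta> *v w)))"
proof -
  have d: "Jg \<theta> w $1$1 * Jg \<theta> w $2$2 - Jg \<theta> w $1$2 * Jg \<theta> w $2$1 \<noteq> 0"
    using assms by (simp add: invertible_det_nz det_2)
  have sym: "Jg \<theta> w $1$2 = Jg \<theta> w $2$1" by (simp add: Jg_entries)
  have tr: "Jg \<theta> w $1$1 + Jg \<theta> w $2$2 = sum (\<lambda>i. w$i) UNIV"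
    unfolding Jg_entries sum.distrib[symmetric]
    by (rule sum.cong) (auto simp: distrib_left[symmetric] sin_cos_squared_add3)
  have q: "w \<bullet> (Lambda_mat \<theta> *v w) = 4 * (Jg \<theta> w $1$1 * Jg \<theta> w $2$2 - Jg \<theta> w $1$2 * Jg \<theta> w $2$1)"
    by (simp only: det_Jg)
  show ?thesis unfolding speb_2[OF sym d] tr q
    by (simp only: mult_divide_mult_cancel_left_if) simp
qed

lemma Jg_nonneg:
  assumes "nonneg w"
  shows "0 \<le> Jg \<theta> w $1$1" "0 \<le> Jg \<theta> w $2$2"
    "0 \<le> Jg \<theta> w $1$1 * Jg \<theta> w $2$2 - Jg \<theta> w $1$2 * Jg \<theta> w $2$1"
proof -
  show "0 \<le> Jg \<theta> w $1$1" "0 \<le> Jg \<theta> w $2$2" unfolding Jg_entries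
    using assms by (auto simp: nonneg_def intro!: sum_nonneg)
  have "0 \<le> w \<bullet> (Lambda_mat \<theta> *v w)" unfolding quad_Lambda
  proof (intro sum_nonneg)
    fix i j
    have "Lambda_mat \<theta> $ i $ j = 1 - cos (2*\<theta>$i - 2*\<theta>$j)"
      by (simp add: Lambda_entry cos_diff)
    then have "0 \<le> Lambda_mat \<theta> $ i $ j" by simp
    then show "0 \<le> w$i * w$j * Lambda_mat \<theta> $ i $ j" using assms by (simp add: nonneg_def)
  qed
  then have "0 \<le> 4 * (Jg \<theta> w $1$1 * Jg \<theta> w $2$2 - Jg \<theta> w $1$2 * Jg \<theta> w $2$1)"
    by (simp only: det_Jg)
  then show "0 \<le> Jg \<theta> w $1$1 * Jg \<theta> w $2$2 - Jg \<theta> w $1$2 * Jg \<theta> w $2$1"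
    by simp
qed

lemma Jg_comb:
  "Jg \<theta> ((1-t) *\<^sub>R w1 + t *\<^sub>R w2) $ a $ b = (1-t) * Jg \<theta> w1 $ a $ b + t * Jg \<theta> w2 $ a $ b"
proof -
  have "Jg \<theta> ((1-t) *\<^sub>R w1 + t *\<^sub>R w2) $ a $ b
      = (\<Sum>x\<in>UNIV. (1-t) * (w1$x * Jr (\<theta>$x) $ a $ b) + t * (w2$x * Jr (\<theta>$x) $ a $ b))"
    unfolding Jg_def by (simp add: algebra_simps)
  also have "\<dots> = (1-t) * Jg \<theta> w1 $ a $ b + t * Jg \<theta> w2 $ a $ b"
    by (simp add: Jg_def sum.distrib sum_distrib_left)
  finally show ?thesis .
qed

lemma Jg_convex:
  assumes w1: "nonneg w1" and w2: "nonneg w2" and t: "0 < t" "t < 1"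
  shows "speb (Jg \<theta> ((1-t) *\<^sub>R w1 + t *\<^sub>R w2)) \<le> ereal (1-t) * speb (Jg \<theta> w1) + ereal t * speb (Jg \<theta> w2)"
proof (cases "invertible (Jg \<theta> w1) \<and> invertible (Jg \<theta> w2)")
  case True
  let ?J1 = "Jg \<theta> w1" and ?J2 = "Jg \<theta> w2" and ?J = "Jg \<theta> ((1-t) *\<^sub>R w1 + t *\<^sub>R w2)"
  have d1: "0 < ?J1$1$1 * ?J1$2$2 - ?J1$1$2 * ?J1$1$2"
    using True Jg_nonneg(3)[OF w1, of \<theta>] by (simp add: invertible_det_nz det_2 Jg_entries)
  have d2: "0 < ?J2$1$1 * ?J2$2$2 - ?J2$1$2 * ?J2$1$2"
    using True Jg_nonneg(3)[OF w2, of \<theta>] by (simp add: invertible_det_nz det_2 Jg_entries)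
  note cc = core_convex[OF Jg_nonneg(1)[OF w1] Jg_nonneg(2)[OF w1] Jg_nonneg(1)[OF w2] Jg_nonneg(2)[OF w2] d1 d2 t]
  have sym: "\<And>J::real^2^2. J = Jg \<theta> w1 \<or> J = Jg \<theta> w2 \<or> J = ?J \<Longrightarrow> J$2$1 = J$1$2"
    by (auto simp: Jg_entries)
  have "speb ?J = ereal ((?J$1$1 + ?J$2$2) / (?J$1$1 * ?J$2$2 - ?J$1$2 * ?J$2$1))"
    by (rule speb_2) (use cc in \<open>simp_all add: Jg_comb sym\<close>)
  moreover have "speb ?J1 = ereal ((?J1$1$1 + ?J1$2$2) / (?J1$1$1 * ?J1$2$2 - ?J1$1$2 * ?J1$2$1))"
    by (rule speb_2) (use d1 in \<open>simp_all add: sym\<close>)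
  moreover have "speb ?J2 = ereal ((?J2$1$1 + ?J2$2$2) / (?J2$1$1 * ?J2$2$2 - ?J2$1$2 * ?J2$2$1))"
    by (rule speb_2) (use d2 in \<open>simp_all add: sym\<close>)
  ultimately show ?thesis using cc by (simp add: Jg_comb sym)
next
  case False
  then have "speb (Jg \<theta> w1) = \<infinity> \<or> speb (Jg \<theta> w2) = \<infinity>" by (auto simp: speb_def)
  moreover have "speb (Jg \<theta> w1) \<noteq> -\<infinity>" "speb (Jg \<theta> w2) \<noteq> -\<infinity>" by (auto simp: speb_def)
  ultimately have eqinf: "ereal (1-t) * speb (Jg \<theta> w1) + ereal t * speb (Jg \<theta> w2) = \<infinity>"
    using t by (cases "speb (Jg \<theta> w1)"; cases "speb (Jg \<theta> w2)") auto
  show ?thesis unfolding eqinf by simp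
qed


lemma Lambda_sym: "transpose (Lambda_mat \<theta>) = Lambda_mat \<theta>"
  by (simp add: vec_eq_iff transpose_def Lambda_entry mult.commute)

lemma Lambda_mult: "Lambda_mat \<theta> *v y = (vec 1 \<bullet> y) *\<^sub>R vec 1 - (cvec (2 *\<^sub>R \<theta>) \<bullet> y) *\<^sub>R cvec (2 *\<^sub>R \<theta>)
   - (svec (2 *\<^sub>R \<theta>) \<bullet> y) *\<^sub>R svec (2 *\<^sub>R \<theta>)"
  by (simp add: vec_eq_iff Lambda_mat_def outer_def matrix_vector_mult_def inner_vec_def
      sum_subtractf sum_distrib_left sum.distrib algebra_simps)

lemma Lambda_rank: "rank (Lambda_mat \<theta>) \<le> 3"
proof -
  let ?S = "{vec 1, cvec (2 *\<^sub>R \<theta>), svec (2 *\<^sub>R \<theta>)} :: (real^'a) set"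
  have sub: "range (\<lambda>x. Lambda_mat \<theta> *v x) \<subseteq> span ?S"
  proof
    fix v assume "v \<in> range (\<lambda>x. Lambda_mat \<theta> *v x)"
    then obtain y where v: "v = Lambda_mat \<theta> *v y" by blast
    show "v \<in> span ?S" unfolding v Lambda_mult
      by (intro span_diff span_scale span_base) auto
  qed
  have "rank (Lambda_mat \<theta>) \<le> card ?S"
    unfolding rank_dim_range by (rule dim_le_card[OF sub]) simp
  also have "card ?S \<le> 3" by (simp add: card_insert_if)
  finally show ?thesis .
qed

lemma nonneg_mult:
  assumes "\<forall>i j. 0 \<le> M$i$j" "nonneg x"
  shows "nonneg (M *v x)"
  using assms by (auto simp: nonneg_def matrix_vector_mult_def intro!: sum_nonneg)

lemma econvex_gen:
  fixes M :: "real^'n^'m" and \<theta> :: "real^'m"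
  assumes "\<forall>i j. 0 \<le> M$i$j"
  shows "econvex_on {x. nonneg x} (\<lambda>x. speb (Jg \<theta> (M *v x)))"
  unfolding econvex_on_def
proof (intro ballI allI impI)
  fix x y :: "real^'n" and t :: real
  assume x: "x \<in> {x. nonneg x}" and y: "y \<in> {x. nonneg x}" and t: "0 < t \<and> t < 1"
  have e: "M *v ((1 - t) *\<^sub>R x + t *\<^sub>R y) = (1-t) *\<^sub>R (M *v x) + t *\<^sub>R (M *v y)"
    by (simp add: matrix_vector_right_distrib matrix_vector_mult_scaleR)
  show "speb (Jg \<theta> (M *v ((1 - t) *\<^sub>R x + t *\<^sub>R y)))
        \<le> ereal (1 - t) * speb (Jg \<theta> (M *v x)) + ereal t * speb (Jg \<theta> (M *v y))"
    unfolding e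
    by (rule Jg_convex) (use x y t nonneg_mult[OF assms] in auto)
qed

lemma formula_gen:
  fixes M :: "real^'n^'m" and \<theta> :: "real^'m"
  assumes "invertible (Jg \<theta> (M *v x))"
  shows "speb (Jg \<theta> (M *v x)) = ereal (4 * (vec 1 \<bullet> (M *v x)) /
                 (x \<bullet> ((transpose M ** Lambda_mat \<theta> ** M) *v x)))"
proof -
  have 1: "vec 1 \<bullet> (M *v x) = sum (\<lambda>i. (M *v x)$i) UNIV" by (simp add: inner_vec_def)
  have 2: "x \<bullet> ((transpose M ** Lambda_mat \<theta> ** M) *v x) = (M *v x) \<bullet> (Lambda_mat \<theta> *v (M *v x))"
  proof -
    have "(transpose M ** Lambda_mat \<theta> ** M) *v x = transpose M *v (Lambda_mat \<theta> *v (M *v x))"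
      by (simp add: matrix_vector_mul_assoc matrix_mul_assoc)
    moreover have "x \<bullet> (transpose M *v z) = (M *v x) \<bullet> z" for z
      by (metis inner_commute dot_lmul_matrix transpose_matrix_vector)
    ultimately show ?thesis by simp
  qed
  show ?thesis unfolding 1 2 by (rule speb_Jg[OF assms])
qed

theorem lemma1:
  fixes \<phi>w \<xi>w :: "real^'n"
    and \<phi>r \<xi>r :: "real^'t^'r"
  assumes xiw_nonneg: "\<forall>j. 0 \<le> \<xi>w$j"
    and xir_nonneg: "\<forall>k j. 0 \<le> \<xi>r$k$j"
  shows
    "econvex_on {x. nonneg x} (\<lambda>x. speb (Je_wireless \<phi>w \<xi>w x))
     \<and> transpose (Lambda_mat \<phi>w) = Lambda_mat \<phi>w
     \<and> rank (Lambda_mat \<phi>w) \<le> 3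
     \<and> (\<forall>x. nonneg x \<and> invertible (Je_wireless \<phi>w \<xi>w x) \<longrightarrow>
          speb (Je_wireless \<phi>w \<xi>w x) =
          ereal (4 * (vec 1 \<bullet> (diag_mat \<xi>w *v x)) /
                 (x \<bullet> ((transpose (diag_mat \<xi>w) ** Lambda_mat \<phi>w ** diag_mat \<xi>w) *v x))))
     \<and> econvex_on {x. nonneg x} (\<lambda>x. speb (Je_radar \<phi>r \<xi>r x))
     \<and> transpose (Lambda_mat (phi_stack \<phi>r)) = Lambda_mat (phi_stack \<phi>r)
     \<and> rank (Lambda_mat (phi_stack \<phi>r)) \<le> 3
     \<and> (\<forall>x. nonneg x \<and> invertible (Je_radar \<phi>r \<xi>r x) \<longrightarrow>
          speb (Je_radar \<phi>r \<xi>r x) =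
          ereal (4 * (vec 1 \<bullet> (R_stack \<xi>r *v x)) /
                 (x \<bullet> ((transpose (R_stack \<xi>r) ** Lambda_mat (phi_stack \<phi>r) ** R_stack \<xi>r) *v x))))"
proof -
  have Mw: "\<forall>i j. 0 \<le> diag_mat \<xi>w $ i $ j" using xiw_nonneg by (simp add: diag_mat_def)
  have Mr: "\<forall>i j. 0 \<le> R_stack \<xi>r $ i $ j" using xir_nonneg by (simp add: R_stack_def diag_mat_def)
  show ?thesis
    unfolding Je_wireless_Jg Je_radar_Jg
    by (intro conjI allI impI econvex_gen[OF Mw] econvex_gen[OF Mr] Lambda_sym Lambda_rank formula_gen) auto
qed

end
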